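(* Let $\mathrm{VES}$, $\mathrm{VFS}$, $\mathrm{CES}$, $\mathrm{CNF}$ and the maps $\Psi,\Psi_v,\Psi_x,\Theta,\Theta_v,\Theta_x,\Upsilon,\Phi$ be as in the context. Then $\mathrm{VES}\cong\mathrm{VFS}$ and $\mathrm{CES}\cong\mathrm{CNF}$, in the following sense: (a) for all terms $M$, values $V$ and elements $c_x$ of $\mathrm{VES}$: $\Theta(\Psi M)=M$, $\Theta_v(\Psi_v V)=V$, $\Theta_x(\Psi_x(c_x))=c_x$; for all terms $M$, values $V$ and formal contexts $c$ of $\mathrm{VFS}$: $\Psi(\Theta M)=M$, $\Psi_v(\Theta_v V)=V$, $\Psi_x(\Theta_x(c))=c$; if $M_1\to M_2$ in $\mathrm{VES}$ then $\Psi M_1\to\Psi M_2$ in $\mathrm{VFS}$; and if $M_1\to M_2$ in $\mathrm{VFS}$ then $\Theta M_1\to\Theta M_2$ in $\mathrm{VES}$; (b) for all terms $M$ and values $V$ of $\mathrm{CES}$: $\Phi(\Upsilon M)=M$ and $\Phi(\Upsilon V)=V$; for all terms $M$ and values $V$ of $\mathrm{CNF}$: $\Upsilon(\Phi M)=M$ and $\Upsilon(\Phi V)=V$; if $M_1\to M_2$ in $\mathrm{CES}$ then $\Upsilon M_1\to\Upsilon M_2$ in $\mathrm{CNF}$; and if $M_1\to M_2$ in $\mathrm{CNF}$ then $\Phi M_1\to\Phi M_2$ in $\mathrm{CES}$.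
   Context: Terms are considered up to $\alpha$-conversion; $[V/x]$ is capture-avoiding substitution; $\to$ is one-step reduction (closure of the listed rules under all constructors). In all four calculi values are $V,W::=x\mid\lambda x.M$. $\mathrm{VES}$ (value-enclosed style): terms $M,N::=V\mid \mathsf{let}\,x:=V\,\mathsf{in}\,c_x$, where for a variable $x$ the class $c_x::= M\mid \mathsf{let}\,y:=xW\,\mathsf{in}\,N$ with $x\notin FV(W)\cup FV(N)$ ($\mathsf{let}\,x:=\dots\,\mathsf{in}\,B$ binds $x$ in $B$). An operation $\mathsf{LET}\,y:=M\,\mathsf{in}\,P$ (and $\mathsf{LET}\,y:=c_z\,\mathsf{in}\,P$, with $z\notin FV(P)$) is defined by: $\mathsf{LET}\,y:=V\,\mathsf{in}\,P=\mathsf{let}\,y:=V\,\mathsf{in}\,P$; $\mathsf{LET}\,y:=(\mathsf{let}\,z:=V\,\mathsf{in}\,c_z)\,\mathsf{in}\,P=\mathsf{let}\,z:=V\,\mathsf{in}\,\mathsf{LET}\,y:=c_z\,\mathsf{in}\,P$; $\mathsf{LET}\,y:=(\mathsf{let}\,x:=zW\,\mathsf{in}\,N)\,\mathsf{in}\,P=\mathsf{let}\,x:=zW\,\mathsf{in}\,\mathsf{LET}\,y:=N\,\mathsf{in}\,P$. Rules: $(B_v)$ $\mathsf{let}\,y:=\lambda x.M\,\mathsf{in}\,\mathsf{let}\,z:=yV\,\mathsf{in}\,P\to\mathsf{let}\,x:=V\,\mathsf{in}\,\mathsf{LET}\,z:=M\,\mathsf{in}\,P$; $(\mathit{let}_v)$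 $\mathsf{let}\,y:=V\,\mathsf{in}\,N\to[V/y]N$ ($N$ a term). $\mathrm{VFS}$: terms $M,N::=\uparrow V\mid \mathsf{C}_v(V,c)$; formal contexts $c::= x.M\mid (W,x.M)$ ($x$ bound in $M$). Auxiliary: $\mathsf{C}_v(\uparrow V:c')=\mathsf{C}_v(V,c')$, $\mathsf{C}_v(\mathsf{C}_v(V,c):c')=\mathsf{C}_v(V,(c:c'))$, $((x.M):c')=x.\mathsf{C}_v(M:c')$, $((W,x.M):c')=(W,x.\mathsf{C}_v(M:c'))$. Rules: $(B_v)$ $\mathsf{C}_v(\lambda x.M,(V,y.N))\to \mathsf{C}_v(V,x.\mathsf{C}_v(M:y.N))$; $(\sigma_v)$ $\mathsf{C}_v(V,y.N)\to [V/y]N$. $\mathrm{CES}$ (continuation-enclosing style): terms $M::=V\mid\mathsf{let}\,x:=VW\,\mathsf{in}\,M$. $\mathsf{LET}\,y:=V\,\mathsf{in}\,P=[V/y]P$; $\mathsf{LET}\,y:=(\mathsf{let}\,x:=VW\,\mathsf{in}\,M)\,\mathsf{in}\,P=\mathsf{let}\,x:=VW\,\mathsf{in}\,\mathsf{LET}\,y:=M\,\mathsf{in}\,P$. Rule: $(\beta_v)$ $\mathsf{let}\,y:=(\lambda x.M)V\,\mathsf{in}\,P\to\mathsf{LET}\,y:=[V/x]M\,\mathsf{in}\,P$. $\mathrm{CNF}$ (commutative normal forms of call-by-value generalized applications): terms $M::=V\mid V(W,x.M)$ ($x$ bound in $M$). Left substitution: $\langle V\backslash x\rangle P=[V/x]P$,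 $\langle V(W,y.N)\backslash x\rangle P=V(W,y.\langle N\backslash x\rangle P)$. Rule: $(\beta_v)$ $(\lambda y.M)(W,x.P)\to\langle [W/y]M\backslash x\rangle P$. Maps: $\Psi(V)=\uparrow\Psi_v(V)$; $\Psi(\mathsf{let}\,x:=V\,\mathsf{in}\,c_x)=\mathsf{C}_v(\Psi_v V,\Psi_x(c_x))$; $\Psi_v(x)=x$; $\Psi_v(\lambda x.M)=\lambda x.\Psi M$; $\Psi_x(M)=x.\Psi M$; $\Psi_x(\mathsf{let}\,y:=xW\,\mathsf{in}\,N)=(\Psi_v W,y.\Psi N)$. $\Theta(\uparrow V)=\Theta_v(V)$; $\Theta(\mathsf{C}_v(V,c))=\mathsf{let}\,x:=\Theta_v V\,\mathsf{in}\,\Theta_x(c)$ ($x$ fresh); $\Theta_v(x)=x$; $\Theta_v(\lambda x.M)=\lambda x.\Theta M$; $\Theta_x(y.M)=[x/y](\Theta M)$; $\Theta_x(W,y.N)=\mathsf{let}\,y:=x(\Theta_v W)\,\mathsf{in}\,\Theta N$. $\Upsilon(x)=x$, $\Upsilon(\lambda x.M)=\lambda x.\Upsilon M$, $\Upsilon(\mathsf{let}\,x:=VW\,\mathsf{in}\,M)=\Upsilon V(\Upsilon W,x.\Upsilon M)$; $\Phi(x)=x$, $\Phi(\lambda x.M)=\lambda x.\Phi M$, $\Phi(V(W,x.M))=\mathsf{let}\,x:=\Phi V\,\Phi W\,\mathsf{in}\,\Phi M$. *)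

theory Defs
  imports Main
begin

text \<open>All four calculi are represented with de Bruijn indices, which is the standard
  way of working with terms up to alpha-conversion: index 0 refers to the nearest
  enclosing binder.  lift k shifts free indices at least k by one; subst k U
  substitutes U for index k (capture-avoidingly) and decrements indices above k.\<close>

text \<open>ves_tm: M ::= V | let x := V in c_x.
  ves_ctx: the class c_x (relative to the scope outside the binder x):
   VC M      = M, with M in the scope of x (x may occur in M);
   VApp W N  = let y := x W in N, where x is the enclosing let-bound variable; since
               x is required not to occur in W nor N, W lives in the outer scope
               and N lives in the outer scope extended by y only.\<close>

datatype ves_tm = VVal ves_val | VLet ves_val ves_ctx
and ves_val = VVar nat | VLam ves_tm
and ves_ctx = VC ves_tm | VApp ves_val ves_tm

primrec ves_lift :: "nat \<Rightarrow> ves_tm \<Rightarrow> ves_tm"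
and ves_lift_v :: "nat \<Rightarrow> ves_val \<Rightarrow> ves_val"
and ves_lift_c :: "nat \<Rightarrow> ves_ctx \<Rightarrow> ves_ctx" where
  "ves_lift k (VVal V) = VVal (ves_lift_v k V)"
| "ves_lift k (VLet V c) = VLet (ves_lift_v k V) (ves_lift_c k c)"
| "ves_lift_v k (VVar i) = VVar (if i < k then i else Suc i)"
| "ves_lift_v k (VLam M) = VLam (ves_lift (Suc k) M)"
| "ves_lift_c k (VC M) = VC (ves_lift (Suc k) M)"
| "ves_lift_c k (VApp W N) = VApp (ves_lift_v k W) (ves_lift (Suc k) N)"

primrec ves_subst :: "nat \<Rightarrow> ves_val \<Rightarrow> ves_tm \<Rightarrow> ves_tm"
and ves_subst_v :: "nat \<Rightarrow> ves_val \<Rightarrow> ves_val \<Rightarrow> ves_val"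
and ves_subst_c :: "nat \<Rightarrow> ves_val \<Rightarrow> ves_ctx \<Rightarrow> ves_ctx" where
  "ves_subst k U (VVal V) = VVal (ves_subst_v k U V)"
| "ves_subst k U (VLet V c) = VLet (ves_subst_v k U V) (ves_subst_c k U c)"
| "ves_subst_v k U (VVar i) = (if i < k then VVar i else if i = k then U else VVar (i - 1))"
| "ves_subst_v k U (VLam M) = VLam (ves_subst (Suc k) (ves_lift_v 0 U) M)"
| "ves_subst_c k U (VC M) = VC (ves_subst (Suc k) (ves_lift_v 0 U) M)"
| "ves_subst_c k U (VApp W N) = VApp (ves_subst_v k U W) (ves_subst (Suc k) (ves_lift_v 0 U) N)"

text \<open>ves_LET M P = LET y := M in P (P under the binder y);
  ves_LETc c P = LET y := c_z in P, where c is a c_z and P (under binder y) does not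
  contain z, so P lives in the scope outside z.\<close>

primrec ves_LET :: "ves_tm \<Rightarrow> ves_tm \<Rightarrow> ves_tm"
and ves_LETc :: "ves_ctx \<Rightarrow> ves_tm \<Rightarrow> ves_ctx" where
  "ves_LET (VVal V) P = VLet V (VC P)"
| "ves_LET (VLet V c) P = VLet V (ves_LETc c P)"
| "ves_LETc (VC M) P = VC (ves_LET M (ves_lift 1 P))"
| "ves_LETc (VApp W N) P = VApp W (ves_LET N (ves_lift 1 P))"

inductive ves_step :: "ves_tm \<Rightarrow> ves_tm \<Rightarrow> bool"
and ves_step_v :: "ves_val \<Rightarrow> ves_val \<Rightarrow> bool"
and ves_step_c :: "ves_ctx \<Rightarrow> ves_ctx \<Rightarrow> bool" where
  ves_Bv: "ves_step (VLet (VLam M) (VApp V P)) (VLet V (VC (ves_LET M (ves_lift 1 P))))"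
| ves_letv: "ves_step (VLet V (VC N)) (ves_subst 0 V N)"
| ves_cVal: "ves_step_v V V' \<Longrightarrow> ves_step (VVal V) (VVal V')"
| ves_cLet1: "ves_step_v V V' \<Longrightarrow> ves_step (VLet V c) (VLet V' c)"
| ves_cLet2: "ves_step_c c c' \<Longrightarrow> ves_step (VLet V c) (VLet V c')"
| ves_cLam: "ves_step M M' \<Longrightarrow> ves_step_v (VLam M) (VLam M')"
| ves_cC: "ves_step M M' \<Longrightarrow> ves_step_c (VC M) (VC M')"
| ves_cApp1: "ves_step_v W W' \<Longrightarrow> ves_step_c (VApp W N) (VApp W' N)"
| ves_cApp2: "ves_step N N' \<Longrightarrow> ves_step_c (VApp W N) (VApp W N')"

text \<open>vfs_tm: M ::= up V | C_v(V,c); vfs_ctx: c ::= x.M (FAbs M) | (W, x.M) (FPair W M).\<close>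

datatype vfs_tm = Up vfs_val | Cv vfs_val vfs_ctx
and vfs_val = FVar nat | FLam vfs_tm
and vfs_ctx = FAbs vfs_tm | FPair vfs_val vfs_tm

primrec vfs_lift :: "nat \<Rightarrow> vfs_tm \<Rightarrow> vfs_tm"
and vfs_lift_v :: "nat \<Rightarrow> vfs_val \<Rightarrow> vfs_val"
and vfs_lift_c :: "nat \<Rightarrow> vfs_ctx \<Rightarrow> vfs_ctx" where
  "vfs_lift k (Up V) = Up (vfs_lift_v k V)"
| "vfs_lift k (Cv V c) = Cv (vfs_lift_v k V) (vfs_lift_c k c)"
| "vfs_lift_v k (FVar i) = FVar (if i < k then i else Suc i)"
| "vfs_lift_v k (FLam M) = FLam (vfs_lift (Suc k) M)"
| "vfs_lift_c k (FAbs M) = FAbs (vfs_lift (Suc k) M)"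
| "vfs_lift_c k (FPair W M) = FPair (vfs_lift_v k W) (vfs_lift (Suc k) M)"

primrec vfs_subst :: "nat \<Rightarrow> vfs_val \<Rightarrow> vfs_tm \<Rightarrow> vfs_tm"
and vfs_subst_v :: "nat \<Rightarrow> vfs_val \<Rightarrow> vfs_val \<Rightarrow> vfs_val"
and vfs_subst_c :: "nat \<Rightarrow> vfs_val \<Rightarrow> vfs_ctx \<Rightarrow> vfs_ctx" where
  "vfs_subst k U (Up V) = Up (vfs_subst_v k U V)"
| "vfs_subst k U (Cv V c) = Cv (vfs_subst_v k U V) (vfs_subst_c k U c)"
| "vfs_subst_v k U (FVar i) = (if i < k then FVar i else if i = k then U else FVar (i - 1))"
| "vfs_subst_v k U (FLam M) = FLam (vfs_subst (Suc k) (vfs_lift_v 0 U) M)"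
| "vfs_subst_c k U (FAbs M) = FAbs (vfs_subst (Suc k) (vfs_lift_v 0 U) M)"
| "vfs_subst_c k U (FPair W M) = FPair (vfs_subst_v k U W) (vfs_subst (Suc k) (vfs_lift_v 0 U) M)"

text \<open>vfs_app M c' = (M : c') and vfs_cat c c' = (c : c').\<close>

primrec vfs_app :: "vfs_tm \<Rightarrow> vfs_ctx \<Rightarrow> vfs_tm"
and vfs_cat :: "vfs_ctx \<Rightarrow> vfs_ctx \<Rightarrow> vfs_ctx" where
  "vfs_app (Up V) c' = Cv V c'"
| "vfs_app (Cv V c) c' = Cv V (vfs_cat c c')"
| "vfs_cat (FAbs M) c' = FAbs (vfs_app M (vfs_lift_c 0 c'))"
| "vfs_cat (FPair W M) c' = FPair W (vfs_app M (vfs_lift_c 0 c'))"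

inductive vfs_step :: "vfs_tm \<Rightarrow> vfs_tm \<Rightarrow> bool"
and vfs_step_v :: "vfs_val \<Rightarrow> vfs_val \<Rightarrow> bool"
and vfs_step_c :: "vfs_ctx \<Rightarrow> vfs_ctx \<Rightarrow> bool" where
  vfs_Bv: "vfs_step (Cv (FLam M) (FPair V N)) (Cv V (FAbs (vfs_app M (vfs_lift_c 0 (FAbs N)))))"
| vfs_sigmav: "vfs_step (Cv V (FAbs N)) (vfs_subst 0 V N)"
| vfs_cUp: "vfs_step_v V V' \<Longrightarrow> vfs_step (Up V) (Up V')"
| vfs_cCv1: "vfs_step_v V V' \<Longrightarrow> vfs_step (Cv V c) (Cv V' c)"
| vfs_cCv2: "vfs_step_c c c' \<Longrightarrow> vfs_step (Cv V c) (Cv V c')"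
| vfs_cLam: "vfs_step M M' \<Longrightarrow> vfs_step_v (FLam M) (FLam M')"
| vfs_cAbs: "vfs_step M M' \<Longrightarrow> vfs_step_c (FAbs M) (FAbs M')"
| vfs_cPair1: "vfs_step_v W W' \<Longrightarrow> vfs_step_c (FPair W M) (FPair W' M)"
| vfs_cPair2: "vfs_step M M' \<Longrightarrow> vfs_step_c (FPair W M) (FPair W M')"

text \<open>ces_tm: M ::= V | let x := V W in M (CLet V W M, M under binder x).\<close>

datatype ces_tm = CVal ces_val | CLet ces_val ces_val ces_tm
and ces_val = CVar nat | CLam ces_tm

primrec ces_lift :: "nat \<Rightarrow> ces_tm \<Rightarrow> ces_tm"
and ces_lift_v :: "nat \<Rightarrow> ces_val \<Rightarrow> ces_val" where
  "ces_lift k (CVal V) = CVal (ces_lift_v k V)"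
| "ces_lift k (CLet V W M) = CLet (ces_lift_v k V) (ces_lift_v k W) (ces_lift (Suc k) M)"
| "ces_lift_v k (CVar i) = CVar (if i < k then i else Suc i)"
| "ces_lift_v k (CLam M) = CLam (ces_lift (Suc k) M)"

primrec ces_subst :: "nat \<Rightarrow> ces_val \<Rightarrow> ces_tm \<Rightarrow> ces_tm"
and ces_subst_v :: "nat \<Rightarrow> ces_val \<Rightarrow> ces_val \<Rightarrow> ces_val" where
  "ces_subst k U (CVal V) = CVal (ces_subst_v k U V)"
| "ces_subst k U (CLet V W M) =
     CLet (ces_subst_v k U V) (ces_subst_v k U W) (ces_subst (Suc k) (ces_lift_v 0 U) M)"
| "ces_subst_v k U (CVar i) = (if i < k then CVar i else if i = k then U else CVar (i - 1))"
| "ces_subst_v k U (CLam M) = CLam (ces_subst (Suc k) (ces_lift_v 0 U) M)"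

text \<open>ces_LET M P = LET y := M in P (P under the binder y).\<close>

primrec ces_LET :: "ces_tm \<Rightarrow> ces_tm \<Rightarrow> ces_tm" where
  "ces_LET (CVal V) P = ces_subst 0 V P"
| "ces_LET (CLet V W M) P = CLet V W (ces_LET M (ces_lift 1 P))"

inductive ces_step :: "ces_tm \<Rightarrow> ces_tm \<Rightarrow> bool"
and ces_step_v :: "ces_val \<Rightarrow> ces_val \<Rightarrow> bool" where
  ces_betav: "ces_step (CLet (CLam M) V P) (ces_LET (ces_subst 0 V M) P)"
| ces_cVal: "ces_step_v V V' \<Longrightarrow> ces_step (CVal V) (CVal V')"
| ces_cLet1: "ces_step_v V V' \<Longrightarrow> ces_step (CLet V W M) (CLet V' W M)"
| ces_cLet2: "ces_step_v W W' \<Longrightarrow> ces_step (CLet V W M) (CLet V W' M)"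
| ces_cLet3: "ces_step M M' \<Longrightarrow> ces_step (CLet V W M) (CLet V W M')"
| ces_cLam: "ces_step M M' \<Longrightarrow> ces_step_v (CLam M) (CLam M')"

text \<open>cnf_tm: M ::= V | V(W, x.M) (NApp V W M, M under binder x).\<close>

datatype cnf_tm = NVal cnf_val | NApp cnf_val cnf_val cnf_tm
and cnf_val = NVar nat | NLam cnf_tm

primrec cnf_lift :: "nat \<Rightarrow> cnf_tm \<Rightarrow> cnf_tm"
and cnf_lift_v :: "nat \<Rightarrow> cnf_val \<Rightarrow> cnf_val" where
  "cnf_lift k (NVal V) = NVal (cnf_lift_v k V)"
| "cnf_lift k (NApp V W M) = NApp (cnf_lift_v k V) (cnf_lift_v k W) (cnf_lift (Suc k) M)"
| "cnf_lift_v k (NVar i) = NVar (if i < k then i else Suc i)"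
| "cnf_lift_v k (NLam M) = NLam (cnf_lift (Suc k) M)"

primrec cnf_subst :: "nat \<Rightarrow> cnf_val \<Rightarrow> cnf_tm \<Rightarrow> cnf_tm"
and cnf_subst_v :: "nat \<Rightarrow> cnf_val \<Rightarrow> cnf_val \<Rightarrow> cnf_val" where
  "cnf_subst k U (NVal V) = NVal (cnf_subst_v k U V)"
| "cnf_subst k U (NApp V W M) =
     NApp (cnf_subst_v k U V) (cnf_subst_v k U W) (cnf_subst (Suc k) (cnf_lift_v 0 U) M)"
| "cnf_subst_v k U (NVar i) = (if i < k then NVar i else if i = k then U else NVar (i - 1))"
| "cnf_subst_v k U (NLam M) = NLam (cnf_subst (Suc k) (cnf_lift_v 0 U) M)"

text \<open>cnf_lsubst M P = left substitution of M for x in P (P under binder x).\<close>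

primrec cnf_lsubst :: "cnf_tm \<Rightarrow> cnf_tm \<Rightarrow> cnf_tm" where
  "cnf_lsubst (NVal V) P = cnf_subst 0 V P"
| "cnf_lsubst (NApp V W N) P = NApp V W (cnf_lsubst N (cnf_lift 1 P))"

inductive cnf_step :: "cnf_tm \<Rightarrow> cnf_tm \<Rightarrow> bool"
and cnf_step_v :: "cnf_val \<Rightarrow> cnf_val \<Rightarrow> bool" where
  cnf_betav: "cnf_step (NApp (NLam M) W P) (cnf_lsubst (cnf_subst 0 W M) P)"
| cnf_cVal: "cnf_step_v V V' \<Longrightarrow> cnf_step (NVal V) (NVal V')"
| cnf_cApp1: "cnf_step_v V V' \<Longrightarrow> cnf_step (NApp V W M) (NApp V' W M)"
| cnf_cApp2: "cnf_step_v W W' \<Longrightarrow> cnf_step (NApp V W M) (NApp V W' M)"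
| cnf_cApp3: "cnf_step M M' \<Longrightarrow> cnf_step (NApp V W M) (NApp V W M')"
| cnf_cLam: "cnf_step M M' \<Longrightarrow> cnf_step_v (NLam M) (NLam M')"

primrec Psi :: "ves_tm \<Rightarrow> vfs_tm"
and Psi_v :: "ves_val \<Rightarrow> vfs_val"
and Psi_x :: "ves_ctx \<Rightarrow> vfs_ctx" where
  "Psi (VVal V) = Up (Psi_v V)"
| "Psi (VLet V c) = Cv (Psi_v V) (Psi_x c)"
| "Psi_v (VVar i) = FVar i"
| "Psi_v (VLam M) = FLam (Psi M)"
| "Psi_x (VC M) = FAbs (Psi M)"
| "Psi_x (VApp W N) = FPair (Psi_v W) (Psi N)"

primrec Theta :: "vfs_tm \<Rightarrow> ves_tm"
and Theta_v :: "vfs_val \<Rightarrow> ves_val"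
and Theta_x :: "vfs_ctx \<Rightarrow> ves_ctx" where
  "Theta (Up V) = VVal (Theta_v V)"
| "Theta (Cv V c) = VLet (Theta_v V) (Theta_x c)"
| "Theta_v (FVar i) = VVar i"
| "Theta_v (FLam M) = VLam (Theta M)"
| "Theta_x (FAbs M) = VC (Theta M)"
| "Theta_x (FPair W N) = VApp (Theta_v W) (Theta N)"

primrec Upsilon :: "ces_tm \<Rightarrow> cnf_tm"
and Upsilon_v :: "ces_val \<Rightarrow> cnf_val" where
  "Upsilon (CVal V) = NVal (Upsilon_v V)"
| "Upsilon (CLet V W M) = NApp (Upsilon_v V) (Upsilon_v W) (Upsilon M)"
| "Upsilon_v (CVar i) = NVar i"
| "Upsilon_v (CLam M) = NLam (Upsilon M)"

primrec Phi :: "cnf_tm \<Rightarrow> ces_tm"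
and Phi_v :: "cnf_val \<Rightarrow> ces_val" where
  "Phi (NVal V) = CVal (Phi_v V)"
| "Phi (NApp V W M) = CLet (Phi_v V) (Phi_v W) (Phi M)"
| "Phi_v (NVar i) = CVar i"
| "Phi_v (NLam M) = CLam (Phi M)"

end

theory Submission
  imports Defs
begin

lemma inv1: "Theta (Psi M) = M" "Theta_v (Psi_v V) = V" "Theta_x (Psi_x c) = c"
  by (induct M and V and c) auto
lemma inv2: "Psi (Theta M) = M" "Psi_v (Theta_v V) = V" "Psi_x (Theta_x c) = c"
  by (induct M and V and c) auto
lemma inv3: "Phi (Upsilon M) = M" "Phi_v (Upsilon_v V) = V"
  by (induct M and V) auto
lemma inv4: "Upsilon (Phi M) = M" "Upsilon_v (Phi_v V) = V"
  by (induct M and V) auto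

lemma psi_lift: "Psi (ves_lift k M) = vfs_lift k (Psi M)"
  "Psi_v (ves_lift_v k V) = vfs_lift_v k (Psi_v V)"
  "Psi_x (ves_lift_c k c) = vfs_lift_c k (Psi_x c)"
  by (induct M and V and c arbitrary: k and k and k) auto
lemma psi_subst: "Psi (ves_subst k U M) = vfs_subst k (Psi_v U) (Psi M)"
  "Psi_v (ves_subst_v k U V) = vfs_subst_v k (Psi_v U) (Psi_v V)"
  "Psi_x (ves_subst_c k U c) = vfs_subst_c k (Psi_v U) (Psi_x c)"
  by (induct M and V and c arbitrary: k U and k U and k U) (auto simp: psi_lift)
lemma psi_LET: "Psi (ves_LET M P) = vfs_app (Psi M) (FAbs (Psi P))"
  "Psi_x (ves_LETc c P) = vfs_cat (Psi_x c) (FAbs (Psi P))"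
  by (induct M and c arbitrary: P and P) (auto simp: psi_lift)

lemma theta_lift: "Theta (vfs_lift k M) = ves_lift k (Theta M)"
  "Theta_v (vfs_lift_v k V) = ves_lift_v k (Theta_v V)"
  "Theta_x (vfs_lift_c k c) = ves_lift_c k (Theta_x c)"
  by (induct M and V and c arbitrary: k and k and k) auto
lemma theta_subst: "Theta (vfs_subst k U M) = ves_subst k (Theta_v U) (Theta M)"
  "Theta_v (vfs_subst_v k U V) = ves_subst_v k (Theta_v U) (Theta_v V)"
  "Theta_x (vfs_subst_c k U c) = ves_subst_c k (Theta_v U) (Theta_x c)"
  by (induct M and V and c arbitrary: k U and k U and k U) (auto simp: theta_lift)
lemma theta_LET: "Theta (vfs_app M (FAbs P)) = ves_LET (Theta M) (Theta P)"
  "Theta_x (vfs_cat c (FAbs P)) = ves_LETc (Theta_x c) (Theta P)"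
  by (induct M and c arbitrary: P and P) (auto simp: theta_lift)

lemma ups_lift: "Upsilon (ces_lift k M) = cnf_lift k (Upsilon M)"
  "Upsilon_v (ces_lift_v k V) = cnf_lift_v k (Upsilon_v V)"
  by (induct M and V arbitrary: k and k) auto
lemma ups_subst: "Upsilon (ces_subst k U M) = cnf_subst k (Upsilon_v U) (Upsilon M)"
  "Upsilon_v (ces_subst_v k U V) = cnf_subst_v k (Upsilon_v U) (Upsilon_v V)"
  by (induct M and V arbitrary: k U and k U) (auto simp: ups_lift)
lemma ups_LET: "Upsilon (ces_LET M P) = cnf_lsubst (Upsilon M) (Upsilon P)"
  by (induct M arbitrary: P) (auto simp: ups_lift ups_subst)

lemma phi_lift: "Phi (cnf_lift k M) = ces_lift k (Phi M)"
  "Phi_v (cnf_lift_v k V) = ces_lift_v k (Phi_v V)"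
  by (induct M and V arbitrary: k and k) auto
lemma phi_subst: "Phi (cnf_subst k U M) = ces_subst k (Phi_v U) (Phi M)"
  "Phi_v (cnf_subst_v k U V) = ces_subst_v k (Phi_v U) (Phi_v V)"
  by (induct M and V arbitrary: k U and k U) (auto simp: phi_lift)
lemma phi_LET: "Phi (cnf_lsubst M P) = ces_LET (Phi M) (Phi P)"
  by (induct M arbitrary: P) (auto simp: phi_lift phi_subst)

lemma step1: "ves_step M1 M2 \<Longrightarrow> vfs_step (Psi M1) (Psi M2)"
  "ves_step_v V1 V2 \<Longrightarrow> vfs_step_v (Psi_v V1) (Psi_v V2)"
  "ves_step_c c1 c2 \<Longrightarrow> vfs_step_c (Psi_x c1) (Psi_x c2)"
proof (induct rule: ves_step_ves_step_v_ves_step_c.inducts)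
  case (ves_Bv M V P)
  then show ?case using vfs_Bv[of "Psi M" "Psi_v V" "Psi P"]
    by (simp add: psi_LET psi_lift)
qed (auto simp: psi_subst intro: vfs_step_vfs_step_v_vfs_step_c.intros)

lemma step2: "vfs_step M1 M2 \<Longrightarrow> ves_step (Theta M1) (Theta M2)"
  "vfs_step_v V1 V2 \<Longrightarrow> ves_step_v (Theta_v V1) (Theta_v V2)"
  "vfs_step_c c1 c2 \<Longrightarrow> ves_step_c (Theta_x c1) (Theta_x c2)"
proof (induct rule: vfs_step_vfs_step_v_vfs_step_c.inducts)
  case (vfs_Bv M V N)
  then show ?case using ves_Bv[of "Theta M" "Theta_v V" "Theta N"]
    by (simp add: theta_LET theta_lift)
qed (auto simp: theta_subst intro: ves_step_ves_step_v_ves_step_c.intros)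

lemma step3: "ces_step M1 M2 \<Longrightarrow> cnf_step (Upsilon M1) (Upsilon M2)"
  "ces_step_v V1 V2 \<Longrightarrow> cnf_step_v (Upsilon_v V1) (Upsilon_v V2)"
proof (induct rule: ces_step_ces_step_v.inducts)
  case (ces_betav M V P)
  then show ?case using cnf_betav[of "Upsilon M" "Upsilon_v V" "Upsilon P"]
    by (simp add: ups_LET ups_subst)
qed (auto intro: cnf_step_cnf_step_v.intros)

lemma step4: "cnf_step M1 M2 \<Longrightarrow> ces_step (Phi M1) (Phi M2)"
  "cnf_step_v V1 V2 \<Longrightarrow> ces_step_v (Phi_v V1) (Phi_v V2)"
proof (induct rule: cnf_step_cnf_step_v.inducts)
  case (cnf_betav M W P)
  then show ?case using ces_betav[of "Phi M" "Phi_v W" "Phi P"]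
    by (simp add: phi_LET phi_subst)
qed (auto intro: ces_step_ces_step_v.intros)

theorem theorem4:
  shows "((\<forall>M. Theta (Psi M) = M) \<and> (\<forall>V. Theta_v (Psi_v V) = V) \<and> (\<forall>c. Theta_x (Psi_x c) = c)
        \<and> (\<forall>M. Psi (Theta M) = M) \<and> (\<forall>V. Psi_v (Theta_v V) = V) \<and> (\<forall>c. Psi_x (Theta_x c) = c)
        \<and> (\<forall>M1 M2. ves_step M1 M2 \<longrightarrow> vfs_step (Psi M1) (Psi M2))
        \<and> (\<forall>M1 M2. vfs_step M1 M2 \<longrightarrow> ves_step (Theta M1) (Theta M2)))
     \<and> ((\<forall>M. Phi (Upsilon M) = M) \<and> (\<forall>V. Phi_v (Upsilon_v V) = V)
        \<and> (\<forall>M. Upsilon (Phi M) = M) \<and> (\<forall>V. Upsilon_v (Phi_v V) = V)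
        \<and> (\<forall>M1 M2. ces_step M1 M2 \<longrightarrow> cnf_step (Upsilon M1) (Upsilon M2))
        \<and> (\<forall>M1 M2. cnf_step M1 M2 \<longrightarrow> ces_step (Phi M1) (Phi M2)))"
  by (simp add: inv1 inv2 inv3 inv4 step1 step2 step3 step4)

end
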